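(* Let $G=(V,E)$ be a connected network with $N\ge 2$ nodes, and let $A=(\alpha_1,\dots,\alpha_{N-1})$ be its $\alpha$-array. Then $$\Big(\tfrac{N(N-1)}{2},0,\dots,0\Big)\succcurlyeq A\succcurlyeq C:=(N-1,N-2,\dots,1)$$ in the extended majorization order. Explicitly, $\sum_{j=1}^{N-1}\alpha_j=\sum_{j=1}^{N-1}(N-j)=\frac{N(N-1)}{2}$, and for every $i=1,\dots,N-2$, $$\frac{N(N-1)}{2}\ \ge\ \sum_{j=1}^{i}\alpha_j\ \ge\ \sum_{j=1}^{i}(N-j).$$
   Context: A network is a finite, simple, undirected, unweighted graph $G=(V,E)$, assumed connected, with $N=\#V$ nodes. The distance $d(u,v)$ between two nodes is the number of edges on a shortest path between them. For $j=1,\dots,N-1$, $\alpha_j$ denotes the number of unordered pairs $\{u,v\}$ of distinct nodes with $d(u,v)=j$; the array $A=(\alpha_1,\dots,\alpha_{N-1})$ is the $\alpha$-array of $G$. Extended majorization: for two sequences $X=(x_1,\dots,x_{N-1})$, $Y=(y_1,\dots,y_{N-1})$ of non-negative numbers (not necessarily ordered), $X\succcurlyeq Y$ means $\sum_{j=1}^{i}x_j\ge\sum_{j=1}^{i}y_j$ for all $i=1,\dots,N-2$ and $\sum_{j=1}^{N-1}x_j=\sum_{j=1}^{N-1}y_j$. Note that $C=(N-1,\dots,1)$ is the $\alpha$-array of the path (chain) on $N$ nodes. *)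

theory Defs
  imports Complex_Main
begin

definition simple_graph :: "'a set \<Rightarrow> 'a set set \<Rightarrow> bool" where
  "simple_graph V E \<longleftrightarrow> finite V \<and> (\<forall>e\<in>E. e \<subseteq> V \<and> card e = 2)"

definition is_walk :: "'a set \<Rightarrow> 'a set set \<Rightarrow> 'a list \<Rightarrow> bool" where
  "is_walk V E xs \<longleftrightarrow> xs \<noteq> [] \<and> set xs \<subseteq> V \<and>
     (\<forall>i. Suc i < length xs \<longrightarrow> {xs ! i, xs ! Suc i} \<in> E)"

definition connected_graph :: "'a set \<Rightarrow> 'a set set \<Rightarrow> bool" where
  "connected_graph V E \<longleftrightarrow>
     (\<forall>u\<in>V. \<forall>v\<in>V. \<exists>xs. is_walk V E xs \<and> hd xs = u \<and> last xs = v)"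

definition gdist :: "'a set \<Rightarrow> 'a set set \<Rightarrow> 'a \<Rightarrow> 'a \<Rightarrow> nat" where
  "gdist V E u v = (LEAST n. \<exists>xs. is_walk V E xs \<and> hd xs = u \<and> last xs = v \<and> length xs = Suc n)"

definition alpha :: "'a set \<Rightarrow> 'a set set \<Rightarrow> nat \<Rightarrow> nat" where
  "alpha V E j = card {{u, v} | u v. u \<in> V \<and> v \<in> V \<and> u \<noteq> v \<and> gdist V E u v = j}"

definition ext_majorizes :: "nat \<Rightarrow> (nat \<Rightarrow> real) \<Rightarrow> (nat \<Rightarrow> real) \<Rightarrow> bool" where
  "ext_majorizes N x y \<longleftrightarrow>
     (\<forall>i\<in>{1..N-2}. (\<Sum>j=1..i. x j) \<ge> (\<Sum>j=1..i. y j)) \<and>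
     (\<Sum>j=1..N-1. x j) = (\<Sum>j=1..N-1. y j)"

end

theory Submission imports Defs begin
lemma all_suc: "(\<forall>i. Suc i < Suc n \<longrightarrow> P i) \<longleftrightarrow> (0 < n \<longrightarrow> P 0) \<and> (\<forall>i. Suc i < n \<longrightarrow> P (Suc i))"
  by (metis Suc_less_eq gr0_conv_Suc not0_implies_Suc zero_less_Suc)
lemma is_walk_Cons: "is_walk V E (x # zs) \<longleftrightarrow> x \<in> V \<and> (zs = [] \<or> ({x, hd zs} \<in> E \<and> is_walk V E zs))"
proof (cases zs)
  case Nil thus ?thesis by (simp add: is_walk_def)
next
  case (Cons y ys)
  have "is_walk V E (x # zs) \<longleftrightarrow> x \<in> V \<and> set zs \<subseteq> V \<and> {x, y} \<in> E \<and> (\<forall>i. Suc i < length zs \<longrightarrow> {zs ! i, zs ! Suc i} \<in> E)"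
    unfolding is_walk_def using all_suc[of "length zs" "\<lambda>i. {(x # zs) ! i, (x # zs) ! Suc i} \<in> E"] Cons
    by simp
  thus ?thesis using Cons by (auto simp: is_walk_def)
qed

lemma walk_append: "is_walk V E xs \<Longrightarrow> is_walk V E ys \<Longrightarrow> last xs = hd ys \<Longrightarrow> is_walk V E (butlast xs @ ys)"
proof (induction xs)
  case Nil thus ?case by (simp add: is_walk_def)
next
  case (Cons a xs)
  show ?case
  proof (cases xs)
    case Nil thus ?thesis using Cons by simp
  next
    case (Cons b xs')
    have w: "is_walk V E xs" "a \<in> V" "{a, b} \<in> E" using Cons.prems \<open>xs = b # xs'\<close> by (auto simp: is_walk_Cons)
    have "is_walk V E (butlast xs @ ys)" using Cons.IH w Cons.prems \<open>xs = b # xs'\<close> by simp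
    moreover have "hd (butlast xs @ ys) = b"
      using Cons.prems \<open>xs = b # xs'\<close> by (cases xs') auto
    moreover have "butlast xs @ ys \<noteq> []" using Cons.prems by (auto simp: is_walk_def)
    ultimately show ?thesis using w \<open>xs = b # xs'\<close> by (simp add: is_walk_Cons)
  qed
qed

lemma walk_rev: "is_walk V E xs \<Longrightarrow> is_walk V E (rev xs)"
  unfolding is_walk_def
proof (intro conjI allI impI)
  fix i assume h: "xs \<noteq> [] \<and> set xs \<subseteq> V \<and> (\<forall>i. Suc i < length xs \<longrightarrow> {xs ! i, xs ! Suc i} \<in> E)"
    and i: "Suc i < length (rev xs)"
  define j where "j = length xs - Suc (Suc i)"
  have "Suc j < length xs" using i by (simp add: j_def)
  hence "{xs ! j, xs ! Suc j} \<in> E" using h by blast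
  moreover have "rev xs ! i = xs ! Suc j" "rev xs ! Suc i = xs ! j" using i
    by (auto simp: rev_nth j_def Suc_diff_Suc)
  ultimately show "{rev xs ! i, rev xs ! Suc i} \<in> E" by (simp add: insert_commute)
qed auto

lemma walk_take: "is_walk V E xs \<Longrightarrow> 0 < k \<Longrightarrow> is_walk V E (take k xs)"
  unfolding is_walk_def by (auto dest: in_set_takeD)

lemma walk_drop: "is_walk V E xs \<Longrightarrow> k < length xs \<Longrightarrow> is_walk V E (drop k xs)"
  unfolding is_walk_def by (auto dest: in_set_dropD)

lemma walk_mono: "is_walk V' E xs \<Longrightarrow> V' \<subseteq> V \<Longrightarrow> is_walk V E xs"
  unfolding is_walk_def by auto


lemma walk_hd_in: "is_walk V E xs \<Longrightarrow> hd xs \<in> V" unfolding is_walk_def by auto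
lemma walk_last_in: "is_walk V E xs \<Longrightarrow> last xs \<in> V" unfolding is_walk_def by auto

lemma gdist_walk:
  assumes "connected_graph V E" "u \<in> V" "v \<in> V"
  shows "\<exists>xs. is_walk V E xs \<and> hd xs = u \<and> last xs = v \<and> length xs = Suc (gdist V E u v)"
proof -
  obtain xs where xs: "is_walk V E xs" "hd xs = u" "last xs = v" using assms unfolding connected_graph_def by blast
  hence "\<exists>n. \<exists>xs. is_walk V E xs \<and> hd xs = u \<and> last xs = v \<and> length xs = Suc n"
    by (metis Suc_pred is_walk_def length_greater_0_conv)
  from LeastI_ex[OF this] show ?thesis unfolding gdist_def .
qed

lemma gdist_le:
  assumes "is_walk V E xs" "hd xs = u" "last xs = v"
  shows "gdist V E u v \<le> length xs - 1"
proof -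
  have "length xs = Suc (length xs - 1)" using assms by (simp add: is_walk_def)
  hence "\<exists>ys. is_walk V E ys \<and> hd ys = u \<and> last ys = v \<and> length ys = Suc (length xs - 1)"
    using assms by blast
  thus ?thesis unfolding gdist_def by (rule Least_le)
qed

lemma gdist_sym:
  assumes "connected_graph V E" "u \<in> V" "v \<in> V"
  shows "gdist V E u v = gdist V E v u"
proof -
  have *: "gdist V E a b \<le> gdist V E b a" if ab: "a \<in> V" "b \<in> V" for a b
  proof -
    obtain xs where xs: "is_walk V E xs" "hd xs = b" "last xs = a" "length xs = Suc (gdist V E b a)"
      using gdist_walk[OF assms(1) ab(2) ab(1)] by blast
    have "gdist V E a b \<le> length (rev xs) - 1"
      by (rule gdist_le[OF walk_rev[OF xs(1)]]) (use xs in \<open>auto simp: hd_rev last_rev is_walk_def\<close>)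
    thus ?thesis using xs by simp
  qed
  show ?thesis using *[of u v] *[of v u] assms by simp
qed

lemma gdist_refl: "u \<in> V \<Longrightarrow> gdist V E u u = 0"
  using gdist_le[of V E "[u]" u u] by (simp add: is_walk_def)

lemma gdist_0:
  assumes "connected_graph V E" "u \<in> V" "v \<in> V" "gdist V E u v = 0"
  shows "u = v"
proof -
  obtain xs where xs: "is_walk V E xs" "hd xs = u" "last xs = v" "length xs = Suc (gdist V E u v)"
    using gdist_walk[OF assms(1-3)] by blast
  then obtain a where "xs = [a]" using assms(4) by (cases xs) auto
  thus ?thesis using xs by simp
qed

lemma hd_butlast_app: "xs \<noteq> [] \<Longrightarrow> last xs = hd ys \<Longrightarrow> hd (butlast xs @ ys) = hd xs"
  by (induction xs) auto

lemma gdist_triangle: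
  assumes "connected_graph V E" "u \<in> V" "v \<in> V" "w \<in> V"
  shows "gdist V E u w \<le> gdist V E u v + gdist V E v w"
proof -
  obtain xs where xs: "is_walk V E xs" "hd xs = u" "last xs = v" "length xs = Suc (gdist V E u v)"
    using gdist_walk[OF assms(1-3)] by blast
  obtain ys where ys: "is_walk V E ys" "hd ys = v" "last ys = w" "length ys = Suc (gdist V E v w)"
    using gdist_walk[OF assms(1,3,4)] by blast
  have w: "is_walk V E (butlast xs @ ys)" using walk_append[OF xs(1) ys(1)] xs ys by simp
  have "hd (butlast xs @ ys) = u"
    using hd_butlast_app[of xs ys] xs ys by (simp add: is_walk_def)
  moreover have "last (butlast xs @ ys) = w" using ys by (cases ys) auto
  ultimately have "gdist V E u w \<le> length (butlast xs @ ys) - 1" using gdist_le[OF w] by blast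
  thus ?thesis using xs ys by simp
qed


lemma shortest_pos:
  assumes c: "connected_graph V E" and uv: "u \<in> V" "v \<in> V"
    and xs: "is_walk V E xs" "hd xs = u" "last xs = v" "length xs = Suc (gdist V E u v)"
    and t: "t \<le> gdist V E u v"
  shows "gdist V E u (xs ! t) = t \<and> gdist V E (xs ! t) v = gdist V E u v - t \<and> xs ! t \<in> V"
proof -
  have tl: "t < length xs" using xs t by simp
  have inV: "xs ! t \<in> V" using xs(1) tl by (auto simp: is_walk_def)
  have w1: "is_walk V E (take (Suc t) xs)" by (rule walk_take[OF xs(1)]) simp
  have h1: "hd (take (Suc t) xs) = u" using xs tl by (cases xs) auto
  have h2: "last (take (Suc t) xs) = xs ! t" using tl by (simp add: last_conv_nth min_def take_Suc_conv_app_nth)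
  have a: "gdist V E u (xs ! t) \<le> t" using gdist_le[OF w1 h1 h2] tl by (simp split: if_splits)
  have w2: "is_walk V E (drop t xs)" by (rule walk_drop[OF xs(1) tl])
  have "hd (drop t xs) = xs ! t" using tl by (simp add: hd_drop_conv_nth)
  moreover have "last (drop t xs) = v" using tl xs by simp
  ultimately have b: "gdist V E (xs ! t) v \<le> gdist V E u v - t" using gdist_le[OF w2] xs by simp
  have "gdist V E u v \<le> gdist V E u (xs ! t) + gdist V E (xs ! t) v"
    by (rule gdist_triangle[OF c uv(1) inV uv(2)])
  thus ?thesis using a b t inV by linarith
qed

lemma shortest_inj:
  assumes c: "connected_graph V E" and uv: "u \<in> V" "v \<in> V"
    and xs: "is_walk V E xs" "hd xs = u" "last xs = v" "length xs = Suc (gdist V E u v)"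
  shows "inj_on (\<lambda>t. xs ! t) {..gdist V E u v}"
  using shortest_pos[OF assms] by (metis atMost_iff inj_onI)

lemma gdist_lt_card:
  assumes c: "connected_graph V E" and f: "finite V" and uv: "u \<in> V" "v \<in> V"
  shows "gdist V E u v < card V"
proof -
  obtain xs where xs: "is_walk V E xs" "hd xs = u" "last xs = v" "length xs = Suc (gdist V E u v)"
    using gdist_walk[OF c uv] by blast
  have "(\<lambda>t. xs ! t) ` {..gdist V E u v} \<subseteq> V" using shortest_pos[OF c uv xs] by auto
  hence "card ((\<lambda>t. xs ! t) ` {..gdist V E u v}) \<le> card V" using f by (simp add: card_mono)
  thus ?thesis using card_image[OF shortest_inj[OF c uv xs]] by simp
qed

lemma gdist_mono:
  assumes c': "connected_graph V' E" and s: "V' \<subseteq> V" and uv: "u \<in> V'" "v \<in> V'"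
  shows "gdist V E u v \<le> gdist V' E u v"
proof -
  obtain xs where xs: "is_walk V' E xs" "hd xs = u" "last xs = v" "length xs = Suc (gdist V' E u v)"
    using gdist_walk[OF c' uv] by blast
  show ?thesis using gdist_le[OF walk_mono[OF xs(1) s] xs(2,3)] xs(4) by simp
qed

lemma connected_hub:
  assumes r: "r \<in> V" and h: "\<And>u. u \<in> V \<Longrightarrow> \<exists>xs. is_walk V E xs \<and> hd xs = u \<and> last xs = r"
  shows "connected_graph V E"
  unfolding connected_graph_def
proof (intro ballI)
  fix u v assume uv: "u \<in> V" "v \<in> V"
  obtain xs where xs: "is_walk V E xs" "hd xs = u" "last xs = r" using h uv by blast
  obtain ys where ys: "is_walk V E ys" "hd ys = v" "last ys = r" using h uv by blast
  have ne: "xs \<noteq> []" "ys \<noteq> []" using xs ys by (auto simp: is_walk_def)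
  have "is_walk V E (butlast xs @ rev ys)"
    by (rule walk_append[OF xs(1) walk_rev[OF ys(1)]]) (use xs ys ne in \<open>simp add: hd_rev\<close>)
  moreover have "hd (butlast xs @ rev ys) = u" using hd_butlast_app[of xs "rev ys"] xs ys ne by (simp add: hd_rev)
  moreover have "last (butlast xs @ rev ys) = v" using ys ne by (simp add: last_rev)
  ultimately show "\<exists>xs. is_walk V E xs \<and> hd xs = u \<and> last xs = v" by blast
qed


definition far :: "'a set \<Rightarrow> 'a set set \<Rightarrow> nat \<Rightarrow> 'a set set" where
  "far V E i = {{u, v} | u v. u \<in> V \<and> v \<in> V \<and> u \<noteq> v \<and> i < gdist V E u v}"

lemma far_w_card:
  assumes c: "connected_graph V E" and f: "finite V" and w: "w \<in> V"
  shows "card {v \<in> V - {w}. i < gdist V E w v} + i \<le> card V - 1 \<or> {v \<in> V - {w}. i < gdist V E w v} = {}"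
proof (cases "{v \<in> V - {w}. i < gdist V E w v} = {}")
  case False
  then obtain v where v: "v \<in> V" "i < gdist V E w v" by auto
  obtain xs where xs: "is_walk V E xs" "hd xs = w" "last xs = v" "length xs = Suc (gdist V E w v)"
    using gdist_walk[OF c w v(1)] by blast
  note sp = shortest_pos[OF c w v(1) xs]
  let ?F = "{v \<in> V - {w}. i < gdist V E w v}"
  let ?N = "(\<lambda>t. xs ! t) ` {1..i}"
  have "inj_on (\<lambda>t. xs ! t) {1..i}"
    using inj_on_subset[OF shortest_inj[OF c w v(1) xs]] v(2) by auto
  hence cN: "card ?N = i" by (simp add: card_image)
  have NV: "?N \<subseteq> V - {w}"
  proof
    fix x assume "x \<in> ?N"
    then obtain t where t: "t \<in> {1..i}" "x = xs ! t" by auto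
    have "gdist V E w x = t" "x \<in> V" using sp[of t] t v(2) by auto
    thus "x \<in> V - {w}" using t gdist_refl[of w V E] by auto
  qed
  have dis: "?N \<inter> ?F = {}"
  proof (rule ccontr)
    assume "?N \<inter> ?F \<noteq> {}"
    then obtain y where "y \<in> ?N" "y \<in> ?F" by blast
    then obtain t where t: "t \<in> {1..i}" "i < gdist V E w (xs ! t)" by blast
    thus False using sp[of t] v(2) by auto
  qed
  have "?N \<union> ?F \<subseteq> V - {w}" using NV by auto
  hence "card (?N \<union> ?F) \<le> card (V - {w})" using f by (simp add: card_mono)
  moreover have "card (?N \<union> ?F) = card ?N + card ?F"
    by (rule card_Un_disjoint) (use f dis in auto)
  ultimately show ?thesis using cN w f by simp
qed simp

lemma far_finite: "finite V \<Longrightarrow> finite (far V E i)"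
  unfolding far_def by (rule finite_subset[of _ "Pow V"]) auto

lemma far_bound:
  assumes "finite V" "connected_graph V E"
  shows "card (far V E i) * 2 \<le> (card V - i) * (card V - i - 1)"
  using assms
proof (induction "card V" arbitrary: V rule: less_induct)
  case less
  note c = less.prems(2) and f = less.prems(1)
  show ?case
  proof (cases "card V \<le> 1")
    case True
    hence "far V E i = {}" unfolding far_def using f by (auto simp: card_le_Suc0_iff_eq)
    thus ?thesis by simp
  next
    case False
    have "V \<noteq> {}" using False by (metis card.empty zero_le)
    then obtain r where r: "r \<in> V" by blast
    have "Max (gdist V E r ` V) \<in> gdist V E r ` V" by (rule Max_in) (use f r in auto)
    then obtain w where w: "w \<in> V" "gdist V E r w = Max (gdist V E r ` V)" by (metis imageE)
    have wmax: "gdist V E r x \<le> gdist V E r w" if "x \<in> V" for x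
      using Max_ge[of "gdist V E r ` V" "gdist V E r x"] f that w(2) by simp
    have "\<not> (\<forall>x\<in>V. \<forall>y\<in>V. x = y)" using False f by (simp add: card_le_Suc0_iff_eq)
    then obtain x where x: "x \<in> V" "x \<noteq> r" using r by blast
    have "gdist V E r x \<noteq> 0" using gdist_0[OF c r x(1)] x by auto
    hence "gdist V E r w \<noteq> 0" using wmax[OF x(1)] by simp
    hence rw: "r \<noteq> w" using gdist_refl[of r V E] r by auto
    define V' where "V' = V - {w}"
    have fV': "finite V'" using f by (simp add: V'_def)
    have cV': "card V' = card V - 1" using w f by (simp add: V'_def)
    have c': "connected_graph V' E"
    proof (rule connected_hub)
      show "r \<in> V'" using r rw by (simp add: V'_def)
      fix u assume u: "u \<in> V'"
      hence uV: "u \<in> V" "u \<noteq> w" by (auto simp: V'_def)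
      obtain xs where xs: "is_walk V E xs" "hd xs = u" "last xs = r" "length xs = Suc (gdist V E u r)"
        using gdist_walk[OF c uV(1) r] by blast
      note sp = shortest_pos[OF c uV(1) r xs]
      have "set xs \<subseteq> V'"
      proof
        fix y assume "y \<in> set xs"
        then obtain t where t: "t < length xs" "y = xs ! t" by (auto simp: in_set_conv_nth)
        show "y \<in> V'"
        proof (cases t)
          case 0 thus ?thesis using t xs uV by (cases xs) (auto simp: V'_def)
        next
          case (Suc t')
          have tle: "t \<le> gdist V E u r" using t xs by simp
          have "gdist V E y r = gdist V E u r - t" "y \<in> V" using sp[OF tle] t(2) by auto
          moreover have "gdist V E u r \<le> gdist V E w r"
            using wmax[OF uV(1)] gdist_sym[OF c uV(1) r] gdist_sym[OF c w(1) r] by simp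
          moreover note tle
          ultimately show ?thesis using Suc by (auto simp: V'_def)
        qed
      qed
      hence "is_walk V' E xs" using xs(1) by (simp add: is_walk_def)
      thus "\<exists>xs. is_walk V' E xs \<and> hd xs = u \<and> last xs = r" using xs by blast
    qed
    have IH: "card (far V' E i) * 2 \<le> (card V' - i) * (card V' - i - 1)"
      using less.hyps[of V'] cV' False fV' c' by simp
    define W where "W = (\<lambda>v. {w, v}) ` {v \<in> V - {w}. i < gdist V E w v}"
    have sub: "far V E i \<subseteq> far V' E i \<union> W"
    proof
      fix p assume "p \<in> far V E i"
      then obtain u v where p: "p = {u, v}" "u \<in> V" "v \<in> V" "u \<noteq> v" "i < gdist V E u v"
        unfolding far_def by blast
      show "p \<in> far V' E i \<union> W"
      proof (cases "u = w \<or> v = w")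
        case True
        thus ?thesis
        proof
          assume uw: "u = w"
          have "v \<in> {v \<in> V - {w}. i < gdist V E w v}" using p uw by auto
          hence "{w, v} \<in> W" unfolding W_def by (rule imageI)
          thus ?thesis using p uw by simp
        next
          assume vw: "v = w"
          have "i < gdist V E w u" using p gdist_sym[OF c p(2,3)] vw by simp
          hence "u \<in> {v \<in> V - {w}. i < gdist V E w v}" using p vw by auto
          hence "{w, u} \<in> W" unfolding W_def by (rule imageI)
          thus ?thesis using p vw by (simp add: insert_commute)
        qed
      next
        case False
        hence uv': "u \<in> V'" "v \<in> V'" using p by (auto simp: V'_def)
        have VV: "V' \<subseteq> V" by (auto simp: V'_def)
        have "gdist V E u v \<le> gdist V' E u v" by (rule gdist_mono[OF c' VV uv'])
        hence "i < gdist V' E u v" using p(5) by linarith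
        hence "{u, v} \<in> far V' E i" unfolding far_def using uv' p(4) by blast
        thus ?thesis using p(1) by simp
      qed
    qed
    have "card (far V E i) \<le> card (far V' E i \<union> W)"
      by (rule card_mono[OF _ sub]) (use far_finite[OF fV'] f in \<open>auto simp: W_def\<close>)
    also have "\<dots> \<le> card (far V' E i) + card W" by (rule card_Un_le)
    finally have A: "card (far V E i) \<le> card (far V' E i) + card W" .
    have B: "card W \<le> card V - 1 - i \<or> W = {}"
      using far_w_card[OF c f w(1), of i] card_image_le[of "{v \<in> V - {w}. i < gdist V E w v}" "\<lambda>v. {w, v}"] f
      unfolding W_def by auto
    show ?thesis
    proof (cases "W = {}")
      case True
      hence "card (far V E i) * 2 \<le> (card V' - i) * (card V' - i - 1)" using A IH by simp
      also have "\<dots> \<le> (card V - i) * (card V - i - 1)" using cV' by (intro mult_mono) auto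
      finally show ?thesis .
    next
      case False
      hence B': "card W \<le> card V - 1 - i" using B by simp
      define k where "k = card V - 1 - i"
      have kk: "card V' - i = k" "card V' - i - 1 = k - 1" using cV' unfolding k_def by simp_all
      have IH': "card (far V E i) * 2 \<le> card (far V' E i) * 2 + card W * 2" using A by simp
      have B'': "card W * 2 \<le> 2 * k" using B' unfolding k_def by simp
      have "card (far V E i) * 2 \<le> k * (k - 1) + 2 * k" using IH' B'' IH unfolding kk by linarith
      also have "\<dots> = (card V - i) * (card V - i - 1)"
      proof (cases k)
        case 0
        hence "card V - i - 1 = 0" unfolding k_def by simp
        thus ?thesis using 0 by simp
      next
        case (Suc k')
        hence "card V - i = Suc (Suc k')" "card V - i - 1 = Suc k'" unfolding k_def by auto
        thus ?thesis using Suc by (simp add: algebra_simps)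
      qed
      finally show ?thesis .
    qed
  qed
qed


definition SP :: "'a set \<Rightarrow> 'a set set \<Rightarrow> nat set \<Rightarrow> 'a set set" where
  "SP V E A = {{u, v} | u v. u \<in> V \<and> v \<in> V \<and> u \<noteq> v \<and> gdist V E u v \<in> A}"

lemma SP_rep:
  assumes c: "connected_graph V E" and p: "p \<in> SP V E A" and q: "p = {u, v}" "u \<in> V" "v \<in> V"
  shows "gdist V E u v \<in> A"
proof -
  obtain a b where ab: "p = {a, b}" "a \<in> V" "b \<in> V" "gdist V E a b \<in> A" using p unfolding SP_def by blast
  have "(a = u \<and> b = v) \<or> (a = v \<and> b = u)" using ab(1) q(1) by (auto simp: doubleton_eq_iff)
  thus ?thesis using ab gdist_sym[OF c q(2,3)] by auto
qed

lemma SP_finite: "finite V \<Longrightarrow> finite (SP V E A)"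
  unfolding SP_def by (rule finite_subset[of _ "Pow V"]) auto

lemma SP_sum:
  assumes c: "connected_graph V E" and f: "finite V" and J: "finite J"
  shows "(\<Sum>j\<in>J. card (SP V E {j})) = card (SP V E J)"
proof -
  have "SP V E J = (\<Union>j\<in>J. SP V E {j})" unfolding SP_def by blast
  moreover have "card (\<Union>j\<in>J. SP V E {j}) = (\<Sum>j\<in>J. card (SP V E {j}))"
  proof (rule card_UN_disjoint[OF J])
    show "\<forall>j\<in>J. finite (SP V E {j})" using SP_finite[OF f] by blast
    show "\<forall>j\<in>J. \<forall>k\<in>J. j \<noteq> k \<longrightarrow> SP V E {j} \<inter> SP V E {k} = {}"
    proof (intro ballI impI)
      fix j k :: nat assume "j \<noteq> k"
      show "SP V E {j} \<inter> SP V E {k} = {}"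
      proof (rule ccontr)
        assume "SP V E {j} \<inter> SP V E {k} \<noteq> {}"
        then obtain p where p: "p \<in> SP V E {j}" "p \<in> SP V E {k}" by blast
        then obtain u v where uv: "p = {u, v}" "u \<in> V" "v \<in> V" unfolding SP_def by blast
        show False using SP_rep[OF c p(1) uv] SP_rep[OF c p(2) uv] \<open>j \<noteq> k\<close> by simp
      qed
    qed
  qed
  ultimately show ?thesis by simp
qed

lemma alpha_SP: "alpha V E j = card (SP V E {j})"
  unfolding alpha_def SP_def by simp

lemma SP_all:
  assumes c: "connected_graph V E" and f: "finite V"
  shows "SP V E {1..card V - 1} = SP V E UNIV"
proof -
  have "gdist V E u v \<in> {1..card V - 1}" if "u \<in> V" "v \<in> V" "u \<noteq> v" for u v
    using gdist_0[OF c that(1,2)] gdist_lt_card[OF c f that(1,2)] that by fastforce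
  thus ?thesis unfolding SP_def by blast
qed

lemma SP_prefix:
  assumes c: "connected_graph V E" and f: "finite V"
  shows "SP V E {1..i} = SP V E UNIV - far V E i" and "far V E i \<subseteq> SP V E UNIV"
proof -
  show "far V E i \<subseteq> SP V E UNIV" unfolding far_def SP_def by blast
  show "SP V E {1..i} = SP V E UNIV - far V E i"
  proof
    show "SP V E {1..i} \<subseteq> SP V E UNIV - far V E i"
    proof
      fix p assume p: "p \<in> SP V E {1..i}"
      then obtain u v where uv: "p = {u, v}" "u \<in> V" "v \<in> V" unfolding SP_def by blast
      have "gdist V E u v \<in> {1..i}" by (rule SP_rep[OF c p uv])
      moreover have "p \<in> far V E i \<Longrightarrow> gdist V E u v \<in> {i<..}"
        using SP_rep[OF c _ uv, of "{i<..}"] unfolding far_def SP_def by auto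
      ultimately show "p \<in> SP V E UNIV - far V E i" using p unfolding SP_def by auto
    qed
  next
    show "SP V E UNIV - far V E i \<subseteq> SP V E {1..i}"
    proof
      fix p assume p: "p \<in> SP V E UNIV - far V E i"
      then obtain u v where uv: "p = {u, v}" "u \<in> V" "v \<in> V" "u \<noteq> v" unfolding SP_def by blast
      have "\<not> i < gdist V E u v" using p uv unfolding far_def by blast
      moreover have "gdist V E u v \<noteq> 0" using gdist_0[OF c uv(2,3)] uv by auto
      ultimately have "gdist V E u v \<in> {1..i}" by auto
      thus "p \<in> SP V E {1..i}" using uv unfolding SP_def by blast
    qed
  qed
qed

lemma SP_card:
  assumes f: "finite V"
  shows "card (SP V E UNIV) * 2 = card V * (card V - 1)"
proof -
  have "SP V E UNIV = {B. B \<subseteq> V \<and> card B = 2}"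
    unfolding SP_def by (auto simp: card_2_iff)
  hence "card (SP V E UNIV) = card V choose 2" using n_subsets[OF f] by simp
  moreover have "even (card V * (card V - 1))" by auto
  ultimately show ?thesis by (simp add: choose_two)
qed

lemma gauss: "i \<le> N \<Longrightarrow> (\<Sum>j=1..i. real (N - j)) * 2 = 2 * real i * real N - real i * (real i + 1)"
  by (induction i) (auto simp: algebra_simps of_nat_diff)


lemma sum_if1: "1 \<le> (i::nat) \<Longrightarrow> (\<Sum>j=1..i. (if j = 1 then (c::real) else 0)) = c"
proof (induction i)
  case (Suc n) thus ?case by (cases n) (auto simp: sum.cl_ivl_Suc)
qed simp

theorem mainTheorem1:
  fixes V :: "'a set" and E :: "'a set set" and N :: nat
  assumes "simple_graph V E" and "connected_graph V E"
    and "N = card V" and "N \<ge> 2"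
  shows "ext_majorizes N (\<lambda>j. if j = 1 then real (N * (N - 1)) / 2 else 0)
                         (\<lambda>j. real (alpha V E j))
       \<and> ext_majorizes N (\<lambda>j. real (alpha V E j)) (\<lambda>j. real (N - j))"
proof -
  have f: "finite V" using assms(1) by (simp add: simple_graph_def)
  note c = assms(2)
  define T where "T = card (SP V E UNIV)"
  have T2n: "T * 2 = N * (N - 1)" using SP_card[OF f, of E] assms(3) unfolding T_def by simp
  have N1: "real (N - 1) = real N - 1" using assms(4) by (simp add: of_nat_diff)
  have "real (T * 2) = real (N * (N - 1))" using T2n by (simp only:)
  hence T2: "real T * 2 = real N * (real N - 1)" by (simp only: of_nat_mult N1 of_nat_numeral)
  have psum: "(\<Sum>j=1..i. real (alpha V E j)) = real (card (SP V E {1..i}))" for i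
    using SP_sum[OF c f, of "{1..i}"] by (simp add: alpha_SP flip: of_nat_sum)
  have tot: "(\<Sum>j=1..N-1. real (alpha V E j)) = real T"
    using psum[of "N-1"] SP_all[OF c f] assms(3) unfolding T_def by simp
  have pre: "real (card (SP V E {1..i})) = real T - real (card (far V E i))" for i
  proof -
    have "card (SP V E {1..i}) = T - card (far V E i)"
      unfolding T_def SP_prefix(1)[OF c f] by (rule card_Diff_subset[OF far_finite[OF f] SP_prefix(2)[OF c f]])
    moreover have "card (far V E i) \<le> T"
      unfolding T_def by (rule card_mono[OF SP_finite[OF f] SP_prefix(2)[OF c f]])
    ultimately show ?thesis by (simp add: of_nat_diff)
  qed
  have tot2: "(\<Sum>j=1..N-1. real (N - j)) = real T"
  proof -
    have "(\<Sum>j=1..N-1. real (N - j)) * 2 = 2 * real (N-1) * real N - real (N-1) * (real (N-1) + 1)"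
      by (rule gauss) simp
    thus ?thesis using T2 assms(4) by (simp add: of_nat_diff algebra_simps)
  qed
  have first: "(\<Sum>j=1..i. (if j = 1 then real (N * (N - 1)) / 2 else 0)) = real T" if "1 \<le> i" for i :: nat
  proof -
    have "(\<Sum>j=1..i. (if j = 1 then real (N * (N - 1)) / 2 else 0)) = real (N * (N - 1)) / 2"
      by (rule sum_if1[OF that])
    also have "\<dots> = real T" using T2 N1 by (simp only: of_nat_mult)
    finally show ?thesis .
  qed
  have upper: "(\<Sum>j=1..i. real (alpha V E j)) \<le> real T" for i
    using psum[of i] pre[of i] by simp
  have lower: "(\<Sum>j=1..i. real (N - j)) \<le> (\<Sum>j=1..i. real (alpha V E j))" if "i \<le> N - 2" for i
  proof -
    have F: "real (card (far V E i)) * 2 \<le> (real N - real i) * (real N - real i - 1)"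
    proof -
      have "card (far V E i) * 2 \<le> (N - i) * (N - i - 1)" using far_bound[OF f c, of i] assms(3) by simp
      hence "real (card (far V E i) * 2) \<le> real ((N - i) * (N - i - 1))" by (simp only: of_nat_le_iff)
      moreover have "real (N - i) = real N - real i" using that assms(4) by (simp add: of_nat_diff)
      moreover have "real (N - i - 1) = real N - real i - 1" using that assms(4) by (simp add: of_nat_diff)
      ultimately show ?thesis by (simp only: of_nat_mult of_nat_numeral)
    qed
    have G: "(\<Sum>j=1..i. real (N - j)) * 2 = 2 * real i * real N - real i * (real i + 1)"
      by (rule gauss) (use that in simp)
    have "(\<Sum>j=1..i. real (N - j)) * 2 \<le> (real T - real (card (far V E i))) * 2"
      using F G T2 by (simp add: algebra_simps)
    thus ?thesis using psum[of i] pre[of i] by simp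
  qed
  have m1: "ext_majorizes N (\<lambda>j. if j = 1 then real (N * (N - 1)) / 2 else 0) (\<lambda>j. real (alpha V E j))"
    unfolding ext_majorizes_def
  proof (intro conjI ballI)
    fix i assume "i \<in> {1..N-2}"
    hence "1 \<le> i" by simp
    from first[OF this] upper[of i]
    show "(\<Sum>j=1..i. real (alpha V E j)) \<le> (\<Sum>j=1..i. (if j = 1 then real (N * (N - 1)) / 2 else 0))" by simp
  next
    have "1 \<le> N - 1" using assms(4) by simp
    from first[OF this] tot
    show "(\<Sum>j=1..N-1. (if j = 1 then real (N * (N - 1)) / 2 else 0)) = (\<Sum>j=1..N-1. real (alpha V E j))" by simp
  qed
  have m2: "ext_majorizes N (\<lambda>j. real (alpha V E j)) (\<lambda>j. real (N - j))"
    unfolding ext_majorizes_def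
  proof (intro conjI ballI)
    fix i assume "i \<in> {1..N-2}"
    hence "i \<le> N - 2" by simp
    from lower[OF this]
    show "(\<Sum>j=1..i. real (N - j)) \<le> (\<Sum>j=1..i. real (alpha V E j))" .
  next
    show "(\<Sum>j=1..N-1. real (alpha V E j)) = (\<Sum>j=1..N-1. real (N - j))" using tot tot2 by simp
  qed
  show ?thesis using m1 m2 by blast
qed

end
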